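(* Let $(X^1,\dots,X^M,Y)$ ($M\ge 2$) be discrete random variables, $X^m$ taking values in $\mathcal{X}^m$ and $Y$ in a finite set $\mathcal{C}$ with prior $\mathbf{p}^*=(\Pr(Y=c))_{c\in\mathcal{C}}$, $\mathbf{p}^*_c>0$. Assume: (A1) (conditional independence) for all $x^{[M]}$ and $c$, $\Pr(X^{[M]}=x^{[M]}\mid Y=c)=\prod_m\Pr(X^m=x^m\mid Y=c)$; (A2) (well-defined prior) whenever $(a^1,\dots,a^M,r^a)$ and $(b^1,\dots,b^M,r^b)$, with $a^m,b^m:\mathcal{X}^m\to\Delta_{\mathcal{C}}$ and $r^a,r^b\in\Delta_{\mathcal{C}}$, both satisfy $\sum_{c\in\mathcal{C}}\frac{\prod_m a^m(x^m)_c}{(r^a_c)^{M-1}}=R(x^1,\dots,x^M)$ (resp. with $b,r^b$) for all $x^{[M]}$, there is a permutation $\pi:\mathcal{C}\to\mathcal{C}$ with $a^m(x^m)_c=b^m(x^m)_{\pi(c)}$ for all $m,x^m,c$ and $r^a_c=r^b_{\pi(c)}$ for all $c$. For classifiers $h^m:\mathcal{X}^m\to\Delta_{\mathcal{C}}$ and $p\in\Delta_{\mathcal{C}}$ with positive entries, and $N\ge M$, define $$TCg(\{x_i^{[M]}\}_{i=1}^N;h^{[M]},p):=1+\frac1N\sum_{i=1}^N\log\sum_{c\in\mathcal{C}}\frac{\prod_m h^m(x^m_i)_c}{(p_c)^{M-1}}-\frac{1}{N!/(N-M)!}\sum_{\substack{i_1,\dots,i_M\\ \text{pairwise distinct}}}\sum_{c\in\mathcal{C}}\frac{\prod_m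 h^m(x^m_{i_m})_c}{(p_c)^{M-1}},$$ and $eTCg(h^{[M]},p):=\mathbb{E}\big[TCg(\{x_i^{[M]}\}_{i=1}^N;h^{[M]},p)\big]$ where $x_1^{[M]},\dots,x_N^{[M]}$ are i.i.d. from the marginal law of $(X^1,\dots,X^M)$. Then: (i) the maximum value of $eTCg$ over all such $(h^{[M]},p)$ equals $\mathrm{TC}(X^1,\dots,X^M)$; (ii) $(h^{[M]}_*,\mathbf{p}^* )$ is a maximizer, i.e. $eTCg(h^{[M]}_*,\mathbf{p}^* )\ge eTCg(h^{[M]},p)$ for all $(h^{[M]},p)$, and the corresponding aggregator $\zeta(\cdot;h^{[M]}_*,\mathbf{p}^* )$ equals $\zeta_*$, i.e. $\zeta(x^{[M]};h^{[M]}_*,\mathbf{p}^* )_c=\Pr(Y=c\mid X^{[M]}=x^{[M]})$; (iii) for any maximizer $(\tilde h^{[M]},\tilde{\mathbf{p}})$ of $eTCg$ there is a permutation $\tilde\pi:\mathcal{C}\to\mathcal{C}$ such that $\tilde h^m(x^m)_c=\Pr(Y=\tilde\pi(c)\mid X^m=x^m)$ for all $m,x^m,c$ and $\tilde{\mathbf{p}}_c=\Pr(Y=\tilde\pi(c))$ for all $c$.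
   Context: $\Delta_{\mathcal{C}}$ denotes the probability simplex over $\mathcal{C}$. $R(x^1,\dots,x^M):=\Pr(X^{[M]}=x^{[M]})/\prod_m\Pr(X^m=x^m)$ is the joint-marginal ratio, and $\mathrm{TC}(X^1,\dots,X^M):=\mathbb{E}_{\text{joint}}[\log R]$ is the total correlation. The Bayesian posterior classifiers are $h^m_*(x^m)_c:=\Pr(Y=c\mid X^m=x^m)$, and the Bayesian posterior aggregator is $\zeta_*(x^{[M]})_c:=\Pr(Y=c\mid X^{[M]}=x^{[M]})$. For classifiers $h^{[M]}$ and $p\in\Delta_{\mathcal{C}}$, the aggregator is $\zeta(x^{[M]};h^{[M]},p):=\mathrm{Normalize}\Big(\big(\prod_m h^m(x^m)_c/(p_c)^{M-1}\big)_{c\in\mathcal{C}}\Big)$, where $\mathrm{Normalize}(v):=v/\sum_c v_c$. *)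

theory Defs
  imports "HOL-Probability.Probability"
begin

(* Joint law: P :: ((nat => 'x) * 'c) pmf; the features are X^m(w) = fst w m, m < M,
   the label is Y(w) = snd w. The label set C is the finite type 'c. *)

definition prob_simplex :: "('c::finite \<Rightarrow> real) set" where
  "prob_simplex = {v. (\<forall>c. 0 \<le> v c) \<and> (\<Sum>c\<in>UNIV. v c) = 1}"

definition Xvec :: "nat \<Rightarrow> ((nat \<Rightarrow> 'x) \<times> 'c) \<Rightarrow> (nat \<Rightarrow> 'x)" where
  "Xvec M w = restrict (fst w) {..<M}"

definition jointX :: "nat \<Rightarrow> ((nat \<Rightarrow> 'x) \<times> 'c) pmf \<Rightarrow> (nat \<Rightarrow> 'x) pmf" where
  "jointX M P = map_pmf (Xvec M) P"

definition Xspace :: "((nat \<Rightarrow> 'x) \<times> 'c) pmf \<Rightarrow> nat \<Rightarrow> 'x set" where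
  "Xspace P m = set_pmf (map_pmf (\<lambda>w. fst w m) P)"

definition prior :: "((nat \<Rightarrow> 'x) \<times> 'c) pmf \<Rightarrow> 'c \<Rightarrow> real" where
  "prior P c = measure_pmf.prob P {w. snd w = c}"

definition Rratio :: "nat \<Rightarrow> ((nat \<Rightarrow> 'x) \<times> 'c) pmf \<Rightarrow> (nat \<Rightarrow> 'x) \<Rightarrow> real" where
  "Rratio M P x = measure_pmf.prob P {w. \<forall>m<M. fst w m = x m}
      / (\<Prod>m<M. measure_pmf.prob P {w. fst w m = x m})"

definition eexpect :: "'a pmf \<Rightarrow> ('a \<Rightarrow> ereal) \<Rightarrow> ereal" where
  "eexpect Q f = enn2ereal (\<integral>\<^sup>+ z. e2ennreal (f z) \<partial>(measure_pmf Q))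
               - enn2ereal (\<integral>\<^sup>+ z. e2ennreal (- f z) \<partial>(measure_pmf Q))"

definition TC :: "nat \<Rightarrow> ((nat \<Rightarrow> 'x) \<times> 'c) pmf \<Rightarrow> ereal" where
  "TC M P = eexpect (jointX M P) (\<lambda>x. ereal (ln (Rratio M P x)))"

definition hstar :: "((nat \<Rightarrow> 'x) \<times> 'c) pmf \<Rightarrow> nat \<Rightarrow> 'x \<Rightarrow> 'c \<Rightarrow> real" where
  "hstar P m x c = measure_pmf.prob P {w. fst w m = x \<and> snd w = c}
                   / measure_pmf.prob P {w. fst w m = x}"

definition zetastar :: "nat \<Rightarrow> ((nat \<Rightarrow> 'x) \<times> 'c) pmf \<Rightarrow> (nat \<Rightarrow> 'x) \<Rightarrow> 'c \<Rightarrow> real" where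
  "zetastar M P x c = measure_pmf.prob P {w. (\<forall>m<M. fst w m = x m) \<and> snd w = c}
                      / measure_pmf.prob P {w. \<forall>m<M. fst w m = x m}"

definition normalize_vec :: "('c::finite \<Rightarrow> real) \<Rightarrow> 'c \<Rightarrow> real" where
  "normalize_vec v = (\<lambda>c. v c / (\<Sum>d\<in>UNIV. v d))"

definition score :: "nat \<Rightarrow> (nat \<Rightarrow> 'x \<Rightarrow> 'c \<Rightarrow> real) \<Rightarrow> ('c \<Rightarrow> real) \<Rightarrow> (nat \<Rightarrow> 'x) \<Rightarrow> 'c \<Rightarrow> real" where
  "score M h p x c = (\<Prod>m<M. h m (x m) c) / (p c) ^ (M - 1)"

definition zeta :: "nat \<Rightarrow> (nat \<Rightarrow> 'x \<Rightarrow> 'c::finite \<Rightarrow> real) \<Rightarrow> ('c \<Rightarrow> real) \<Rightarrow> (nat \<Rightarrow> 'x) \<Rightarrow> 'c \<Rightarrow> real" where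
  "zeta M h p x = normalize_vec (score M h p x)"

definition elog :: "real \<Rightarrow> ereal" where
  "elog t = (if 0 < t then ereal (ln t) else -\<infinity>)"

definition TCg :: "nat \<Rightarrow> nat \<Rightarrow> (nat \<Rightarrow> (nat \<Rightarrow> 'x)) \<Rightarrow> (nat \<Rightarrow> 'x \<Rightarrow> 'c::finite \<Rightarrow> real) \<Rightarrow> ('c \<Rightarrow> real) \<Rightarrow> ereal" where
  "TCg M N s h p =
     1 + ereal (1 / real N) * (\<Sum>i<N. elog (\<Sum>c\<in>UNIV. score M h p (s i) c))
     - ereal (1 / (fact N / fact (N - M)) *
         (\<Sum>\<iota>\<in>{\<iota> \<in> {..<M} \<rightarrow>\<^sub>E {..<N}. inj_on \<iota> {..<M}}.
            \<Sum>c\<in>UNIV. (\<Prod>m<M. h m (s (\<iota> m) m) c) / (p c) ^ (M - 1)))"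

definition eTCg :: "nat \<Rightarrow> nat \<Rightarrow> ((nat \<Rightarrow> 'x) \<times> 'c::finite) pmf \<Rightarrow> (nat \<Rightarrow> 'x \<Rightarrow> 'c \<Rightarrow> real) \<Rightarrow> ('c \<Rightarrow> real) \<Rightarrow> ereal" where
  "eTCg M N P h p = eexpect (Pi_pmf {..<N} undefined (\<lambda>_. jointX M P)) (\<lambda>s. TCg M N s h p)"

definition admissible :: "nat \<Rightarrow> ((nat \<Rightarrow> 'x) \<times> 'c::finite) pmf \<Rightarrow> (nat \<Rightarrow> 'x \<Rightarrow> 'c \<Rightarrow> real) \<Rightarrow> ('c \<Rightarrow> real) \<Rightarrow> bool" where
  "admissible M P h p \<longleftrightarrow> (\<forall>m<M. \<forall>x\<in>Xspace P m. h m x \<in> prob_simplex) \<and> p \<in> prob_simplex \<and> (\<forall>c. 0 < p c)"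

end

theory Submission
  imports Defs
begin


lemma eexpect_real:
  assumes "integrable (measure_pmf Q) u"
  shows "eexpect Q (\<lambda>z. ereal (u z)) = ereal (\<integral>z. u z \<partial>Q)"
proof -
  obtain r q where "0 \<le> r" "0 \<le> q"
    "(\<integral>\<^sup>+x. ennreal (u x)\<partial>Q) = ennreal r"
    "(\<integral>\<^sup>+x. ennreal (-u x)\<partial>Q) = ennreal q"
    "integral\<^sup>L Q u = r - q"
    by (rule integrableE[OF assms])
  then show ?thesis by (simp add: eexpect_def)
qed

lemma eexpect_cong:
  assumes "\<And>z. z \<in> set_pmf Q \<Longrightarrow> f z = g z"
  shows "eexpect Q f = eexpect Q g"
proof -
  have "(\<integral>\<^sup>+ z. e2ennreal (f z) \<partial>measure_pmf Q) = (\<integral>\<^sup>+ z. e2ennreal (g z) \<partial>measure_pmf Q)"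
    by (intro nn_integral_cong_AE AE_pmfI) (simp add: assms)
  moreover have "(\<integral>\<^sup>+ z. e2ennreal (- f z) \<partial>measure_pmf Q) = (\<integral>\<^sup>+ z. e2ennreal (- g z) \<partial>measure_pmf Q)"
    by (intro nn_integral_cong_AE AE_pmfI) (simp add: assms)
  ultimately show ?thesis by (simp add: eexpect_def)
qed

lemma eexpect_le:
  assumes g: "integrable (measure_pmf Q) g"
    and le: "\<And>z. z \<in> set_pmf Q \<Longrightarrow> f z \<le> ereal (g z)"
  shows "eexpect Q f \<le> ereal (\<integral>z. g z \<partial>Q) \<and>
    (eexpect Q f = ereal (\<integral>z. g z \<partial>Q) \<longrightarrow> (\<forall>z\<in>set_pmf Q. f z = ereal (g z)))"
proof -
  define a where "a = (\<integral>\<^sup>+ z. e2ennreal (f z) \<partial>measure_pmf Q)"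
  define b where "b = (\<integral>\<^sup>+ z. e2ennreal (- f z) \<partial>measure_pmf Q)"
  have "a \<le> (\<integral>\<^sup>+ z. ennreal (g z) \<partial>measure_pmf Q)"
    unfolding a_def
    by (intro nn_integral_mono_AE AE_pmfI) (metis e2ennreal_mono e2ennreal_ereal le)
  also have "\<dots> < \<infinity>" using g by (simp add: real_integrable_def top.not_eq_extremum)
  finally have afin: "a \<noteq> \<infinity>" by simp
  have ee: "eexpect Q f = enn2ereal a - enn2ereal b" by (simp add: eexpect_def a_def b_def)
  show ?thesis
  proof (cases "b = \<infinity>")
    case True
    have "enn2ereal a \<noteq> \<infinity>" using afin by simp
    then have "eexpect Q f = -\<infinity>" using True ee by (cases "enn2ereal a") auto
    then show ?thesis by simp
  next
    case False
    have nomi: "f z \<noteq> -\<infinity>" if z: "z \<in> set_pmf Q" for z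
    proof
      assume fz: "f z = -\<infinity>"
      have "(\<integral>\<^sup>+ x. top * indicator {z} x \<partial>measure_pmf Q) \<le> b"
        unfolding b_def
        by (intro nn_integral_mono) (auto simp: fz split: split_indicator)
      moreover have "(\<integral>\<^sup>+ x. top * indicator {z} x \<partial>measure_pmf Q) = top * ennreal (pmf Q z)"
        by (simp add: emeasure_pmf_single)
      moreover have "pmf Q z > 0" using z by (simp add: pmf_positive)
      ultimately have "b = top" by (simp add: ennreal_top_mult top_unique)
      then show False using False by simp
    qed
    define f' where "f' z = real_of_ereal (f z)" for z
    have ff: "f z = ereal (f' z)" if "z \<in> set_pmf Q" for z
    proof -
      have "f z \<noteq> \<infinity>" using le[OF that] by auto
      then show ?thesis using nomi[OF that] unfolding f'_def by (cases "f z") auto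
    qed
    have a': "a = (\<integral>\<^sup>+ z. ennreal (f' z) \<partial>measure_pmf Q)"
      unfolding a_def by (intro nn_integral_cong_AE AE_pmfI) (simp add: ff)
    have b': "b = (\<integral>\<^sup>+ z. ennreal (- f' z) \<partial>measure_pmf Q)"
      unfolding b_def by (intro nn_integral_cong_AE AE_pmfI) (simp add: ff)
    have int: "integrable (measure_pmf Q) f'"
      using afin False a' b' by (simp add: real_integrable_def)
    have E: "eexpect Q f = ereal (\<integral>z. f' z \<partial>Q)"
      using eexpect_cong[of Q f "\<lambda>z. ereal (f' z)"] ff eexpect_real[OF int] by simp
    have fg: "f' z \<le> g z" if "z \<in> set_pmf Q" for z using le[OF that] ff[OF that] by simp
    have mono: "(\<integral>z. f' z \<partial>Q) \<le> (\<integral>z. g z \<partial>Q)"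
      by (intro integral_mono_AE int g AE_pmfI fg)
    have eq: "\<forall>z\<in>set_pmf Q. f z = ereal (g z)" if "(\<integral>z. f' z \<partial>Q) = (\<integral>z. g z \<partial>Q)"
    proof -
      have "(\<integral>z. g z - f' z \<partial>Q) = 0" using that int g by simp
      then have "AE z in Q. g z - f' z = 0"
      proof -
        have "AE x in measure_pmf Q. 0 \<le> g x - f' x" using fg by (auto intro!: AE_pmfI)
        then show ?thesis
          using integral_nonneg_eq_0_iff_AE[of "measure_pmf Q" "\<lambda>z. g z - f' z"] int g
            \<open>(\<integral>z. g z - f' z \<partial>Q) = 0\<close> by auto
      qed
      then show ?thesis using ff by (auto simp: AE_measure_pmf_iff)
    qed
    show ?thesis using E mono eq by simp
  qed
qed



lemma card_product_dependent:
  assumes "finite S"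
    and "\<forall>x \<in> S. finite (T x)"
  shows "card {(x, y). x \<in> S \<and> y \<in> T x} = (\<Sum>x \<in> S. card (T x))"
  using card_SigmaI[OF assms, symmetric]
  by (auto intro!: arg_cong[where f=card] simp add: Sigma_def)

lemma card_extensional_funcset_inj_on:
  assumes "finite S" "finite T" "card S \<le> card T"
  shows "card {f \<in> extensional_funcset S T. inj_on f S} = fact (card T) div (fact (card T - card S))"
  using assms
proof (induct S arbitrary: T rule: finite_induct)
  case empty
  from this show ?case
    by (simp add: Collect_conv_if PiE_empty_domain)
next
  case (insert x S)
  have finite_delete: "finite {f : extensional_funcset S (T - {x}). inj_on f S}" for x
  proof -
    from \<open>finite T\<close> have "finite (T - {x})"
      by auto
    from \<open>finite S\<close> this have *: "finite (extensional_funcset S (T - {x}))"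
      by (rule finite_PiE)
    have "{f : extensional_funcset S (T - {x}). inj_on f S} \<subseteq> (extensional_funcset S (T - {x}))"
      by auto
    with * show ?thesis
      by (auto intro: finite_subset)
  qed
  from insert have hyps: "\<forall>y \<in> T. card ({g. g \<in> extensional_funcset S (T - {y}) \<and> inj_on g S}) =
      fact (card T - 1) div fact ((card T - 1) - card S)"(is "\<forall> _ \<in> T. _ = ?k")
    by auto
  from extensional_funcset_extend_domain_inj_on_eq[OF \<open>x \<notin> S\<close>]
  have "card {f. f \<in> extensional_funcset (insert x S) T \<and> inj_on f (insert x S)} =
      card ((\<lambda>(y, g). g(x := y)) ` {(y, g). y \<in> T \<and> g \<in> extensional_funcset S (T - {y}) \<and> inj_on g S})"
    by metis
  also from extensional_funcset_extend_domain_inj_onI[OF \<open>x \<notin> S\<close>, of T]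
  have "\<dots> = card {(y, g). y \<in> T \<and> g \<in> extensional_funcset S (T - {y}) \<and> inj_on g S}"
    by (simp add: card_image)
  also have "card {(y, g). y \<in> T \<and> g \<in> extensional_funcset S (T - {y}) \<and> inj_on g S} =
      card {(y, g). y \<in> T \<and> g \<in> {f \<in> extensional_funcset S (T - {y}). inj_on f S}}"
    by auto
  also from \<open>finite T\<close> finite_delete
  have "\<dots> = (\<Sum>y \<in> T. card {g. g \<in> extensional_funcset S (T - {y}) \<and>  inj_on g S})"
    by (subst card_product_dependent) auto
  also from hyps have "\<dots> = (card T) * ?k"
    by auto
  also have "\<dots> = card T * fact (card T - 1) div fact (card T - card (insert x S))"
    using insert unfolding div_mult1_eq[of "card T" "fact (card T - 1)"]
    by (simp add: fact_mod)
  also have "\<dots> = fact (card T) div fact (card T - card (insert x S))"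
    using insert by (simp add: fact_reduce[of "card T"])
  finally show ?case .
qed


lemma card_inj_real:
  assumes "M \<le> N"
  shows "real (card {\<iota> \<in> {..<M} \<rightarrow>\<^sub>E {..<N::nat}. inj_on \<iota> {..<M::nat}}) = fact N / fact (N - M)"
proof -
  have c: "card {\<iota> \<in> {..<M} \<rightarrow>\<^sub>E {..<N::nat}. inj_on \<iota> {..<M::nat}} = fact N div fact (N - M)"
    using card_extensional_funcset_inj_on[of "{..<M}" "{..<N}"] assms by simp
  have d: "(fact (N - M) :: nat) dvd fact N" by (rule fact_dvd) simp
  have "real (fact N div fact (N - M) :: nat) = real (fact N :: nat) / real (fact (N - M) :: nat)"
    by (rule real_of_nat_div[OF d])
  also have "\<dots> = fact N / fact (N - M)" by (simp only: of_nat_fact)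
  finally show ?thesis unfolding c .
qed



definition marg :: "((nat \<Rightarrow> 'x) \<times> 'c) pmf \<Rightarrow> nat \<Rightarrow> 'x pmf" where
  "marg P m = map_pmf (\<lambda>w. fst w m) P"
definition Q0 :: "nat \<Rightarrow> ((nat \<Rightarrow> 'x) \<times> 'c) pmf \<Rightarrow> (nat \<Rightarrow> 'x) pmf" where
  "Q0 M P = Pi_pmf {..<M} undefined (marg P)"
definition Pj :: "nat \<Rightarrow> ((nat \<Rightarrow> 'x) \<times> 'c) pmf \<Rightarrow> (nat \<Rightarrow> 'x) \<Rightarrow> real" where
  "Pj M P x = measure_pmf.prob P {w. \<forall>m<M. fst w m = x m}"
definition Pq :: "nat \<Rightarrow> ((nat \<Rightarrow> 'x) \<times> 'c) pmf \<Rightarrow> (nat \<Rightarrow> 'x) \<Rightarrow> real" where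
  "Pq M P x = (\<Prod>m<M. measure_pmf.prob P {w. fst w m = x m})"
definition Ess :: "nat \<Rightarrow> ((nat \<Rightarrow> 'x) \<times> 'c) pmf \<Rightarrow> (nat \<Rightarrow> 'x) set" where
  "Ess M P = {x \<in> {..<M} \<rightarrow>\<^sub>E UNIV. \<forall>m<M. x m \<in> Xspace P m}"

lemma pmf_marg: "pmf (marg P m) y = measure_pmf.prob P {w. fst w m = y}"
  by (simp add: marg_def pmf_map vimage_def)

lemma Xspace_marg: "Xspace P m = set_pmf (marg P m)"
  by (simp add: Xspace_def marg_def)

lemma Xspace_pos: "y \<in> Xspace P m \<Longrightarrow> 0 < measure_pmf.prob P {w. fst w m = y}"
  by (metis Xspace_marg pmf_marg pmf_positive)

lemma pmf_Q0: "x \<in> {..<M} \<rightarrow>\<^sub>E UNIV \<Longrightarrow> pmf (Q0 M P) x = Pq M P x"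
  unfolding Q0_def Pq_def by (subst pmf_Pi) (auto simp: pmf_marg PiE_def extensional_def)

lemma set_Q0: "set_pmf (Q0 M P) = Ess M P"
  unfolding Q0_def Ess_def
  by (subst set_Pi_pmf) (auto simp: PiE_dflt_def Xspace_marg PiE_def extensional_def)

lemma pmf_J: "x \<in> {..<M} \<rightarrow>\<^sub>E UNIV \<Longrightarrow> pmf (jointX M P) x = Pj M P x"
proof -
  assume x: "x \<in> {..<M} \<rightarrow>\<^sub>E UNIV"
  have eq: "Xvec M -` {x} = {w. \<forall>m<M. fst w m = x m}"
  proof (intro set_eqI iffI)
    fix w assume "w \<in> Xvec M -` {x}"
    then show "w \<in> {w. \<forall>m<M. fst w m = x m}" by (auto simp: Xvec_def)
  next
    fix w assume "w \<in> {w. \<forall>m<M. fst w m = x m}"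
    then show "w \<in> Xvec M -` {x}" using x
      by (auto simp: Xvec_def restrict_def PiE_def extensional_def)
  qed
  show ?thesis unfolding jointX_def pmf_map Pj_def eq ..
qed

lemma set_J: "x \<in> set_pmf (jointX M P) \<Longrightarrow> x \<in> Ess M P"
proof -
  assume "x \<in> set_pmf (jointX M P)"
  then obtain w where w: "w \<in> set_pmf P" and xw: "x = Xvec M w"
    by (auto simp: jointX_def)
  have "x \<in> {..<M} \<rightarrow>\<^sub>E UNIV" unfolding xw Xvec_def by simp
  moreover have "x m \<in> Xspace P m" if "m < M" for m
    using that w unfolding xw Xvec_def Xspace_def by simp
  ultimately show ?thesis unfolding Ess_def by simp
qed

lemma set_J_ext: "x \<in> set_pmf (jointX M P) \<Longrightarrow> x \<in> {..<M} \<rightarrow>\<^sub>E UNIV"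
  using set_J[of x M P] unfolding Ess_def by blast

lemma Pq_pos: "x \<in> Ess M P \<Longrightarrow> 0 < Pq M P x"
  unfolding Pq_def Ess_def by (auto intro!: prod_pos Xspace_pos)

lemma Rratio_eq: "Rratio M P x = Pj M P x / Pq M P x"
  by (simp add: Rratio_def Pj_def Pq_def)

lemma set_J_iff: "x \<in> Ess M P \<Longrightarrow> x \<in> set_pmf (jointX M P) \<longleftrightarrow> 0 < Pj M P x"
  using pmf_J[of x M P] by (auto simp: Ess_def set_pmf_iff Pj_def order_less_le)

lemma sum_snd:
  fixes P :: "('a \<times> 'c::finite) pmf"
  shows "(\<Sum>c\<in>UNIV. measure_pmf.prob P {w. A w \<and> snd w = c}) = measure_pmf.prob P {w. A w}"
proof -
  have "{w. A w} = (\<Union>c\<in>UNIV. {w. A w \<and> snd w = c})" by auto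
  moreover have "measure_pmf.prob P (\<Union>c\<in>UNIV. {w. A w \<and> snd w = c}) =
      (\<Sum>c\<in>UNIV. measure_pmf.prob P {w. A w \<and> snd w = c})"
    by (rule measure_pmf.finite_measure_finite_Union) (auto simp: disjoint_family_on_def)
  ultimately show ?thesis by simp
qed

lemma simplex_le1: "v \<in> prob_simplex \<Longrightarrow> 0 \<le> v c \<and> v c \<le> 1"
proof -
  assume v: "v \<in> prob_simplex"
  then have "v c \<le> (\<Sum>d\<in>UNIV. v d)" by (intro member_le_sum) (auto simp: prob_simplex_def)
  then show ?thesis using v by (auto simp: prob_simplex_def)
qed

lemma score_bound:
  assumes "\<And>m. m < M \<Longrightarrow> 0 \<le> h m (x m) c \<and> h m (x m) c \<le> 1" and "0 < p c"
  shows "0 \<le> score M h p x c \<and> score M h p x c \<le> 1 / p c ^ (M - 1)"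
proof -
  have "0 \<le> (\<Prod>m<M. h m (x m) c)" using assms by (auto intro!: prod_nonneg)
  moreover have "(\<Prod>m<M. h m (x m) c) \<le> 1" using assms by (auto intro!: prod_le_1)
  ultimately show ?thesis using assms(2) unfolding score_def
    by (auto intro!: divide_right_mono)
qed

context
  fixes P :: "((nat \<Rightarrow> 'x) \<times> 'c::finite) pmf" and M :: nat
  assumes M1: "1 \<le> M"
    and prior_pos: "\<forall>c. 0 < prior P c"
    and A1: "\<forall>x \<in> {..<M} \<rightarrow>\<^sub>E (UNIV :: 'x set). \<forall>c.
        measure_pmf.prob P {w. (\<forall>m<M. fst w m = x m) \<and> snd w = c} / prior P c
        = (\<Prod>m<M. measure_pmf.prob P {w. fst w m = x m \<and> snd w = c} / prior P c)"
begin

lemma hstar_score: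
  assumes x: "x \<in> Ess M P"
  shows "score M (hstar P) (prior P) x c = measure_pmf.prob P {w. (\<forall>m<M. fst w m = x m) \<and> snd w = c} / Pq M P x"
proof -
  define p where "p = prior P c"
  define a where "a m = measure_pmf.prob P {w. fst w m = x m \<and> snd w = c}" for m
  define J where "J = measure_pmf.prob P {w. (\<forall>m<M. fst w m = x m) \<and> snd w = c}"
  have p: "0 < p" using prior_pos by (simp add: p_def)
  have xe: "x \<in> {..<M} \<rightarrow>\<^sub>E UNIV" using x by (simp add: Ess_def)
  have "J / p = (\<Prod>m<M. a m / p)" using A1 xe by (simp add: J_def a_def p_def)
  also have "\<dots> = (\<Prod>m<M. a m) / p ^ M" by (simp add: prod_dividef)
  finally have "(\<Prod>m<M. a m) = J * p ^ M / p" using p by (simp add: field_simps)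
  also have "p ^ M = p * p ^ (M - 1)" using M1 by (metis Suc_diff_le diff_Suc_1 power_Suc)
  finally have pa: "(\<Prod>m<M. a m) = J * p ^ (M - 1)" using p by simp
  have "score M (hstar P) (prior P) x c = (\<Prod>m<M. a m / measure_pmf.prob P {w. fst w m = x m}) / p ^ (M - 1)"
    by (simp add: score_def hstar_def a_def p_def)
  also have "\<dots> = (\<Prod>m<M. a m) / Pq M P x / p ^ (M - 1)"
    by (simp add: prod_dividef Pq_def)
  also have "\<dots> = J / Pq M P x" using pa p by simp
  finally show ?thesis by (simp add: J_def)
qed

lemma hstar_R:
  assumes x: "x \<in> Ess M P"
  shows "(\<Sum>c\<in>UNIV. score M (hstar P) (prior P) x c) = Rratio M P x"
  using sum_snd[of P "\<lambda>w. \<forall>m<M. fst w m = x m"]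
  by (simp add: hstar_score[OF x] sum_divide_distrib[symmetric] Rratio_eq Pj_def)

lemma hstar_simplex: "y \<in> Xspace P m \<Longrightarrow> hstar P m y \<in> prob_simplex"
  using Xspace_pos[of y P m] sum_snd[of P "\<lambda>w. fst w m = y"]
  by (simp add: prob_simplex_def hstar_def sum_divide_distrib[symmetric])

lemma prior_simplex: "prior P \<in> prob_simplex"
  using sum_snd[of P "\<lambda>w. True"] by (simp add: prob_simplex_def prior_def)

lemma hstar_adm: "admissible M P (hstar P) (prior P)"
  using hstar_simplex prior_simplex prior_pos by (simp add: admissible_def)

end


lemma pmf_integrable_bound:
  fixes f :: "'a \<Rightarrow> real"
  assumes "\<And>x. x \<in> set_pmf p \<Longrightarrow> \<bar>f x\<bar> \<le> B"
  shows "integrable (measure_pmf p) f"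
  by (rule measure_pmf.integrable_const_bound[where B=B]) (auto simp: AE_measure_pmf_iff assms)

definition Ssum :: "nat \<Rightarrow> (nat \<Rightarrow> 'x \<Rightarrow> 'c::finite \<Rightarrow> real) \<Rightarrow> ('c \<Rightarrow> real) \<Rightarrow> (nat \<Rightarrow> 'x) \<Rightarrow> real" where
  "Ssum M h p x = (\<Sum>c\<in>UNIV. score M h p x c)"

lemma Ssum_bound:
  assumes adm: "admissible M P h p" and x: "x \<in> Ess M P"
  shows "0 \<le> Ssum M h p x \<and> Ssum M h p x \<le> (\<Sum>c\<in>UNIV. 1 / p c ^ (M - 1))"
proof -
  have b: "0 \<le> score M h p x c \<and> score M h p x c \<le> 1 / p c ^ (M - 1)" for c
  proof (rule score_bound)
    fix m assume "m < M"
    then have "h m (x m) \<in> prob_simplex" using adm x by (auto simp: admissible_def Ess_def)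
    then show "0 \<le> h m (x m) c \<and> h m (x m) c \<le> 1" by (rule simplex_le1)
  next
    show "0 < p c" using adm by (simp add: admissible_def)
  qed
  show ?thesis unfolding Ssum_def using b by (auto intro!: sum_nonneg sum_mono)
qed

context
  fixes P :: "((nat \<Rightarrow> 'x) \<times> 'c::finite) pmf" and M :: nat
  assumes M1: "1 \<le> M"
    and prior_pos: "\<forall>c. 0 < prior P c"
    and A1: "\<forall>x \<in> {..<M} \<rightarrow>\<^sub>E (UNIV :: 'x set). \<forall>c.
        measure_pmf.prob P {w. (\<forall>m<M. fst w m = x m) \<and> snd w = c} / prior P c
        = (\<Prod>m<M. measure_pmf.prob P {w. fst w m = x m \<and> snd w = c} / prior P c)"
begin

abbreviation "J \<equiv> jointX M P"
abbreviation "R \<equiv> Rratio M P"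
definition "Bd = (\<Sum>c\<in>UNIV. 1 / prior P c ^ (M - 1))"

lemma R_J: "x \<in> set_pmf J \<Longrightarrow> 0 < R x"
  using set_J[of x M P] set_J_iff[of x M P] Pq_pos[of x M P] by (simp add: Rratio_eq)

lemma R_notJ: "x \<in> Ess M P \<Longrightarrow> x \<notin> set_pmf J \<Longrightarrow> R x = 0"
proof -
  assume x: "x \<in> Ess M P" "x \<notin> set_pmf J"
  have "0 \<le> Pj M P x" by (simp add: Pj_def)
  then have "Pj M P x = 0" using x set_J_iff[of x M P] by simp
  then show ?thesis by (simp add: Rratio_eq)
qed

lemma R_bound: "x \<in> Ess M P \<Longrightarrow> R x \<le> Bd"
  using Ssum_bound[OF hstar_adm[OF M1 prior_pos A1], of x] hstar_R[OF M1 prior_pos A1, of x]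
  by (simp add: Ssum_def Bd_def)

lemma Bd_pos: "0 < Bd"
  unfolding Bd_def using prior_pos by (intro sum_pos) auto

lemma nn_GR:
  assumes G: "\<And>x. x \<in> Ess M P \<Longrightarrow> 0 \<le> G x"
  shows "(\<integral>\<^sup>+x. ennreal (G x / R x) \<partial>measure_pmf J)
       = (\<integral>\<^sup>+x. ennreal (G x * indicator (set_pmf J) x) \<partial>measure_pmf (Q0 M P))"
proof -
  have "ennreal (pmf J x) * ennreal (G x / R x)
      = ennreal (pmf (Q0 M P) x) * ennreal (G x * indicator (set_pmf J) x)" for x
  proof (cases "x \<in> set_pmf J")
    case True
    have xe: "x \<in> Ess M P" using set_J True by blast
    have xe': "x \<in> {..<M} \<rightarrow>\<^sub>E UNIV" using xe by (simp add: Ess_def)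
    have pj: "0 < Pj M P x" using set_J_iff[OF xe] True by simp
    have pq: "0 < Pq M P x" using Pq_pos[OF xe] .
    have g: "0 \<le> G x" using G[OF xe] .
    have gr: "0 \<le> G x / R x" using g R_J[OF True] by simp
    have "ennreal (pmf J x) * ennreal (G x / R x) = ennreal (Pj M P x) * ennreal (G x / R x)"
      by (simp only: pmf_J[OF xe'])
    also have "\<dots> = ennreal (Pj M P x * (G x / R x))"
      by (rule ennreal_mult[symmetric]) (use pj gr in auto)
    also have "Pj M P x * (G x / R x) = Pq M P x * G x"
      using pj pq by (simp add: Rratio_eq field_simps)
    also have "ennreal (Pq M P x * G x) = ennreal (Pq M P x) * ennreal (G x)"
      by (rule ennreal_mult) (use pq g in auto)
    also have "\<dots> = ennreal (pmf (Q0 M P) x) * ennreal (G x * indicator (set_pmf J) x)"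
      using True by (simp add: pmf_Q0[OF xe'])
    finally show ?thesis .
  next
    case False
    then show ?thesis by (simp add: set_pmf_iff)
  qed
  then show ?thesis by (simp add: nn_integral_measure_pmf)
qed

lemma int_GR:
  assumes G: "\<And>x. x \<in> Ess M P \<Longrightarrow> 0 \<le> G x \<and> G x \<le> C"
  shows "integrable (measure_pmf J) (\<lambda>x. G x / R x)"
    and "integrable (measure_pmf (Q0 M P)) (\<lambda>x. G x * indicator (set_pmf J) x)"
    and "(\<integral>x. G x / R x \<partial>J) = (\<integral>x. G x * indicator (set_pmf J) x \<partial>Q0 M P)"
proof -
  have C: "0 \<le> C" if "x \<in> Ess M P" for x using G[OF that] by simp
  show i2: "integrable (measure_pmf (Q0 M P)) (\<lambda>x. G x * indicator (set_pmf J) x)"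
    by (rule pmf_integrable_bound[where B=C]) (auto simp: set_Q0 G C split: split_indicator)
  have nn: "(\<integral>\<^sup>+x. ennreal (G x / R x) \<partial>measure_pmf J)
       = (\<integral>\<^sup>+x. ennreal (G x * indicator (set_pmf J) x) \<partial>measure_pmf (Q0 M P))"
    using nn_GR G by blast
  have nonneg: "AE x in measure_pmf J. 0 \<le> G x / R x"
    using G set_J R_J by (auto intro!: AE_pmfI divide_nonneg_pos)
  have nonneg2: "AE x in measure_pmf (Q0 M P). 0 \<le> G x * indicator (set_pmf J) x"
    using G by (auto intro!: AE_pmfI simp: set_Q0 split: split_indicator)
  have fin: "(\<integral>\<^sup>+x. ennreal (G x * indicator (set_pmf J) x) \<partial>measure_pmf (Q0 M P)) < \<infinity>"
    using i2 by (simp add: real_integrable_def top.not_eq_extremum)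
  show i1: "integrable (measure_pmf J) (\<lambda>x. G x / R x)"
    by (rule integrableI_nonneg) (use nonneg nn fin in auto)
  have "ennreal (\<integral>x. G x / R x \<partial>J) = ennreal (\<integral>x. G x * indicator (set_pmf J) x \<partial>Q0 M P)"
    using nn nn_integral_eq_integral[OF i1 nonneg] nn_integral_eq_integral[OF i2 nonneg2] by simp
  moreover have "0 \<le> (\<integral>x. G x / R x \<partial>J)" using nonneg by (rule integral_nonneg_AE)
  moreover have "0 \<le> (\<integral>x. G x * indicator (set_pmf J) x \<partial>Q0 M P)" using nonneg2 by (rule integral_nonneg_AE)
  ultimately show "(\<integral>x. G x / R x \<partial>J) = (\<integral>x. G x * indicator (set_pmf J) x \<partial>Q0 M P)"
    by simp
qed

lemma lnR_bound:
  assumes "0 < r" "r \<le> Bd"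
  shows "\<bar>ln r\<bar> \<le> \<bar>ln Bd\<bar> + 1 / r"
proof (cases "1 \<le> r")
  case True
  have "ln r \<le> ln Bd" using assms by simp
  moreover have "ln Bd \<le> \<bar>ln Bd\<bar>" by simp
  moreover have "0 \<le> 1 / r" using assms by simp
  moreover have "0 \<le> ln r" using True by simp
  ultimately show ?thesis by linarith
next
  case False
  have "ln (1 / r) \<le> 1 / r - 1" using assms by (intro ln_le_minus_one) simp
  moreover have "ln (1 / r) = - ln r" using assms by (simp add: ln_div)
  moreover have "ln r < 0" using False assms by simp
  ultimately show ?thesis using assms by auto
qed

lemma int_lnR: "integrable (measure_pmf J) (\<lambda>x. ln (R x))"
proof -
  have i: "integrable (measure_pmf J) (\<lambda>x. 1 / R x)"
    using int_GR(1)[of "\<lambda>_. 1" 1] by simp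
  have i': "integrable (measure_pmf J) (\<lambda>x. \<bar>ln Bd\<bar> + 1 / R x)"
    using i by simp
  have ae: "AE x in measure_pmf J. norm (ln (R x)) \<le> norm (\<bar>ln Bd\<bar> + 1 / R x)"
    proof (rule AE_pmfI)
      fix x assume x: "x \<in> set_pmf J"
      have "\<bar>ln (R x)\<bar> \<le> \<bar>ln Bd\<bar> + 1 / R x"
        using R_J[OF x] R_bound[OF set_J[OF x]] by (rule lnR_bound)
      then show "norm (ln (R x)) \<le> norm (\<bar>ln Bd\<bar> + 1 / R x)" using R_J[OF x] by simp
    qed
  show ?thesis by (rule Bochner_Integration.integrable_bound[OF i' _ ae]) simp
qed

lemma TC_eq: "TC M P = ereal (\<integral>x. ln (R x) \<partial>J)"
  unfolding TC_def by (rule eexpect_real[OF int_lnR])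

end


lemma prod_reindex_inj:
  fixes H :: "nat \<Rightarrow> nat \<Rightarrow> 'b::comm_monoid_mult"
  assumes inj: "inj_on \<iota> {..<M}" and rng: "\<iota> ` {..<M} \<subseteq> {..<N}"
  shows "(\<Prod>i<N. (if i \<in> \<iota> ` {..<M} then H (the_inv_into {..<M} \<iota> i) i else 1)) = (\<Prod>m<M. H m (\<iota> m))"
proof -
  have "(\<Prod>i<N. (if i \<in> \<iota> ` {..<M} then H (the_inv_into {..<M} \<iota> i) i else 1))
      = (\<Prod>i\<in>\<iota> ` {..<M}. (if i \<in> \<iota> ` {..<M} then H (the_inv_into {..<M} \<iota> i) i else 1))"
    by (rule prod.mono_neutral_right) (use rng in auto)
  also have "\<dots> = (\<Prod>m<M. (if \<iota> m \<in> \<iota> ` {..<M} then H (the_inv_into {..<M} \<iota> (\<iota> m)) (\<iota> m) else 1))"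
    by (subst prod.reindex[OF inj]) (simp add: o_def)
  also have "\<dots> = (\<Prod>m<M. H m (\<iota> m))"
    by (intro prod.cong refl) (simp add: the_inv_into_f_f[OF inj])
  finally show ?thesis .
qed

lemma prod_inj_expect:
  fixes F :: "nat \<Rightarrow> 'a \<Rightarrow> real" and \<iota> :: "nat \<Rightarrow> nat"
  assumes inj: "inj_on \<iota> {..<M}" and rng: "\<iota> ` {..<M} \<subseteq> {..<N}"
    and int: "\<And>m. m < M \<Longrightarrow> integrable (measure_pmf D) (F m)"
    and nn: "\<And>m y. m < M \<Longrightarrow> y \<in> set_pmf D \<Longrightarrow> 0 \<le> F m y"
  shows "(\<integral>s. (\<Prod>m<M. F m (s (\<iota> m))) \<partial>Pi_pmf {..<N} dflt (\<lambda>_. D)) = (\<Prod>m<M. \<integral>y. F m y \<partial>D)"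
proof -
  define G where "G i y = (if i \<in> \<iota> ` {..<M} then F (the_inv_into {..<M} \<iota> i) y else 1)" for i y
  have inv: "the_inv_into {..<M} \<iota> i < M" if "i \<in> \<iota> ` {..<M}" for i
    using that by (auto simp: the_inv_into_f_f[OF inj])
  have 1: "(\<Prod>i<N. G i (s i)) = (\<Prod>m<M. F m (s (\<iota> m)))" for s
    unfolding G_def by (rule prod_reindex_inj[OF inj rng, of "\<lambda>m i. F m (s i)"])
  have one: "(\<integral>y. 1 \<partial>measure_pmf D) = (1::real)" by simp
  have "(\<Prod>i<N. \<integral>y. G i y \<partial>D) = (\<Prod>i<N. (if i \<in> \<iota> ` {..<M} then (\<lambda>m i. \<integral>y. F m y \<partial>D) (the_inv_into {..<M} \<iota> i) i else 1))"
    by (intro prod.cong refl) (simp add: G_def one)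
  also have "\<dots> = (\<Prod>m<M. \<integral>y. F m y \<partial>D)"
    by (rule prod_reindex_inj[OF inj rng, of "\<lambda>m i. \<integral>y. F m y \<partial>D"])
  finally have 2: "(\<Prod>i<N. \<integral>y. G i y \<partial>D) = (\<Prod>m<M. \<integral>y. F m y \<partial>D)" .
  have gi: "integrable (measure_pmf D) (G i)" for i
    by (cases "i \<in> \<iota> ` {..<M}") (simp_all add: G_def[abs_def] int inv)
  have gn: "0 \<le> G i y" if "y \<in> set_pmf D" for i y
    by (cases "i \<in> \<iota> ` {..<M}") (simp_all add: G_def nn inv that)
  have "(\<integral>s. (\<Prod>i<N. G i (s i)) \<partial>Pi_pmf {..<N} dflt (\<lambda>_. D)) = (\<Prod>i<N. \<integral>y. G i y \<partial>D)"
    by (rule expectation_prod_Pi_pmf) (simp_all add: gi gn)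
  then show ?thesis by (simp only: 1 2)
qed

definition Kf :: "nat \<Rightarrow> nat \<Rightarrow> (nat \<Rightarrow> 'x \<Rightarrow> 'c::finite \<Rightarrow> real) \<Rightarrow> ('c \<Rightarrow> real) \<Rightarrow> (nat \<Rightarrow> (nat \<Rightarrow> 'x)) \<Rightarrow> real" where
  "Kf M N h p s = 1 / (fact N / fact (N - M)) *
         (\<Sum>\<iota>\<in>{\<iota> \<in> {..<M} \<rightarrow>\<^sub>E {..<N}. inj_on \<iota> {..<M}}.
            \<Sum>c\<in>UNIV. (\<Prod>m<M. h m (s (\<iota> m) m) c) / (p c) ^ (M - 1))"

lemma TCg_alt: "TCg M N s h p = 1 + ereal (1 / real N) * (\<Sum>i<N. elog (Ssum M h p (s i))) - ereal (Kf M N h p s)"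
  by (simp add: TCg_def Kf_def Ssum_def)

definition Tq :: "nat \<Rightarrow> ((nat \<Rightarrow> 'x) \<times> 'c) pmf \<Rightarrow> (nat \<Rightarrow> 'x \<Rightarrow> 'c::finite \<Rightarrow> real) \<Rightarrow> ('c \<Rightarrow> real) \<Rightarrow> real" where
  "Tq M P h p = (\<Sum>c\<in>UNIV. (\<Prod>m<M. \<integral>y. h m y c \<partial>marg P m) / p c ^ (M - 1))"

lemma adm_h01: "admissible M P h p \<Longrightarrow> m < M \<Longrightarrow> y \<in> Xspace P m \<Longrightarrow> 0 \<le> h m y c \<and> h m y c \<le> 1"
  by (rule simplex_le1) (simp add: admissible_def)

lemma J_marg: "m < M \<Longrightarrow> map_pmf (\<lambda>y. y m) (jointX M P) = marg P m"
  by (simp add: jointX_def marg_def pmf.map_comp o_def Xvec_def)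

lemma int_marg: "admissible M P h p \<Longrightarrow> m < M \<Longrightarrow> integrable (measure_pmf (marg P m)) (\<lambda>y. h m y c)"
proof (rule pmf_integrable_bound[where B=1])
  fix y assume "admissible M P h p" "m < M" "y \<in> set_pmf (marg P m)"
  then have "0 \<le> h m y c \<and> h m y c \<le> 1" using adm_h01 by (metis Xspace_marg)
  then show "\<bar>h m y c\<bar> \<le> 1" by simp
qed

lemma EQ0:
  assumes adm: "admissible M P h p"
  shows "integrable (measure_pmf (Q0 M P)) (Ssum M h p)" "(\<integral>x. Ssum M h p x \<partial>Q0 M P) = Tq M P h p"
proof -
  show "integrable (measure_pmf (Q0 M P)) (Ssum M h p)"
    by (rule pmf_integrable_bound[where B="\<Sum>c\<in>UNIV. 1 / p c ^ (M - 1)"])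
       (use Ssum_bound[OF adm] in \<open>auto simp: set_Q0\<close>)
  have i: "integrable (measure_pmf (Q0 M P)) (\<lambda>x. \<Prod>m<M. h m (x m) c)" for c
    unfolding Q0_def by (rule integrable_prod_Pi_pmf) (auto intro: int_marg[OF adm])
  have e: "(\<integral>x. (\<Prod>m<M. h m (x m) c) \<partial>Q0 M P) = (\<Prod>m<M. \<integral>y. h m y c \<partial>marg P m)" for c
    unfolding Q0_def
    by (rule expectation_prod_Pi_pmf) (auto intro: int_marg[OF adm] dest: adm_h01[OF adm] simp: Xspace_marg)
  have "(\<integral>x. Ssum M h p x \<partial>Q0 M P) = (\<Sum>c\<in>UNIV. (\<integral>x. (\<Prod>m<M. h m (x m) c) \<partial>Q0 M P) / p c ^ (M - 1))"
    unfolding Ssum_def score_def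
    by (subst Bochner_Integration.integral_sum) (auto intro!: i)
  then show "(\<integral>x. Ssum M h p x \<partial>Q0 M P) = Tq M P h p" by (simp add: e Tq_def)
qed

context
  fixes P :: "((nat \<Rightarrow> 'x) \<times> 'c::finite) pmf" and M N :: nat
  assumes MN: "M \<le> N"
begin

abbreviation "QN \<equiv> Pi_pmf {..<N} undefined (\<lambda>_. jointX M P)"

lemma set_QN: "s \<in> set_pmf QN \<Longrightarrow> i < N \<Longrightarrow> s i \<in> set_pmf (jointX M P)"
  by (auto simp: set_Pi_pmf PiE_dflt_def)

lemma sample_in: "x \<in> set_pmf (jointX M P) \<Longrightarrow> (\<lambda>i. if i < N then x else undefined) \<in> set_pmf QN"
  by (auto simp: set_Pi_pmf PiE_dflt_def)

lemma comp_QN: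
  fixes f :: "(nat \<Rightarrow> 'x) \<Rightarrow> real"
  assumes i: "i < N" and f: "integrable (measure_pmf (jointX M P)) f"
  shows "integrable (measure_pmf QN) (\<lambda>s. f (s i))" "(\<integral>s. f (s i) \<partial>QN) = (\<integral>x. f x \<partial>jointX M P)"
proof -
  have m: "map_pmf (\<lambda>s. s i) QN = jointX M P" using i by (simp add: Pi_pmf_component)
  show "integrable (measure_pmf QN) (\<lambda>s. f (s i))"
    using f integrable_map_pmf_eq[of "\<lambda>s. s i" QN f] m by simp
  show "(\<integral>s. f (s i) \<partial>QN) = (\<integral>x. f x \<partial>jointX M P)"
    using integral_map_pmf[of "\<lambda>s. s i" QN f] m by simp
qed

lemma EK:
  assumes adm: "admissible M P h p"
  shows "integrable (measure_pmf QN) (Kf M N h p)" "(\<integral>s. Kf M N h p s \<partial>QN) = Tq M P h p"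
proof -
  define Inj where "Inj = {\<iota> \<in> {..<M} \<rightarrow>\<^sub>E {..<N}. inj_on \<iota> {..<M}}"
  have pin: "s (\<iota> m) m \<in> Xspace P m" if "s \<in> set_pmf QN" "\<iota> \<in> Inj" "m < M" for s \<iota> m
  proof -
    have "\<iota> m < N" using that by (auto simp: Inj_def)
    then have "s (\<iota> m) \<in> Ess M P" by (rule set_J[OF set_QN[OF that(1)]])
    then show ?thesis using that(3) by (simp add: Ess_def)
  qed
  have ip: "integrable (measure_pmf QN) (\<lambda>s. \<Prod>m<M. h m (s (\<iota> m) m) c)" if "\<iota> \<in> Inj" for \<iota> c
  proof (rule pmf_integrable_bound[where B=1])
    fix s assume s: "s \<in> set_pmf QN"
    have "\<And>m. m < M \<Longrightarrow> 0 \<le> h m (s (\<iota> m) m) c \<and> h m (s (\<iota> m) m) c \<le> 1"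
      using adm_h01[OF adm] pin[OF s that] by blast
    then have "0 \<le> (\<Prod>m<M. h m (s (\<iota> m) m) c)" "(\<Prod>m<M. h m (s (\<iota> m) m) c) \<le> 1"
      by (auto intro!: prod_le_1 prod_nonneg)
    then show "\<bar>\<Prod>m<M. h m (s (\<iota> m) m) c\<bar> \<le> 1" by simp
  qed
  have hy: "0 \<le> h m (y m) c \<and> h m (y m) c \<le> 1" if "m < M" "y \<in> set_pmf (jointX M P)" for m y c
  proof -
    have "y \<in> Ess M P" by (rule set_J[OF that(2)])
    then have "y m \<in> Xspace P m" using that(1) by (simp add: Ess_def)
    then show ?thesis by (rule adm_h01[OF adm that(1)])
  qed
  have ep: "(\<integral>s. (\<Prod>m<M. h m (s (\<iota> m) m) c) \<partial>QN) = (\<Prod>m<M. \<integral>y. h m y c \<partial>marg P m)" if "\<iota> \<in> Inj" for \<iota> c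
  proof -
    have "(\<integral>s. (\<Prod>m<M. h m (s (\<iota> m) m) c) \<partial>QN) = (\<Prod>m<M. \<integral>y. h m (y m) c \<partial>jointX M P)"
    proof (rule prod_inj_expect[where F="\<lambda>m y. h m (y m) c"])
      show "inj_on \<iota> {..<M}" "\<iota> ` {..<M} \<subseteq> {..<N}" using that by (auto simp: Inj_def)
    next
      fix m assume m: "m < M"
      show "integrable (measure_pmf (jointX M P)) (\<lambda>y. h m (y m) c)"
      proof (rule pmf_integrable_bound[where B=1])
        fix y assume "y \<in> set_pmf (jointX M P)"
        then show "\<bar>h m (y m) c\<bar> \<le> 1" using hy[OF m] by force
      qed
    next
      fix m y assume "m < M" "y \<in> set_pmf (jointX M P)"
      then show "0 \<le> h m (y m) c" using hy by blast
    qed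
    also have "\<dots> = (\<Prod>m<M. \<integral>y. h m y c \<partial>marg P m)"
    proof (intro prod.cong refl)
      fix m assume "m \<in> {..<M}"
      then have mm: "map_pmf (\<lambda>y. y m) (jointX M P) = marg P m" by (simp add: J_marg)
      have "(\<integral>y. h m y c \<partial>map_pmf (\<lambda>y. y m) (jointX M P)) = (\<integral>y. h m (y m) c \<partial>jointX M P)"
        by (rule integral_map_pmf)
      then show "(\<integral>y. h m (y m) c \<partial>jointX M P) = (\<integral>y. h m y c \<partial>marg P m)"
        by (simp only: mm)
    qed
    finally show ?thesis .
  qed
  define A :: real where "A = fact N / fact (N - M)"
  have A: "real (card Inj) = A" unfolding A_def Inj_def by (rule card_inj_real[OF MN])
  have Apos: "0 < A" unfolding A_def by simp
  have finInj: "finite Inj" unfolding Inj_def by (rule finite_subset[of _ "{..<M} \<rightarrow>\<^sub>E {..<N}"]) (auto intro: finite_PiE)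
  have Kf_eq: "Kf M N h p s = 1 / A *
         (\<Sum>\<iota>\<in>Inj. \<Sum>c\<in>UNIV. (\<Prod>m<M. h m (s (\<iota> m) m) c) / (p c) ^ (M - 1))" for s
    unfolding Kf_def Inj_def A_def ..
  have isum: "integrable (measure_pmf QN) (\<lambda>s. \<Sum>\<iota>\<in>Inj. \<Sum>c\<in>UNIV. (\<Prod>m<M. h m (s (\<iota> m) m) c) / (p c) ^ (M - 1))"
    by (intro Bochner_Integration.integrable_sum integrable_divide ip)
  show "integrable (measure_pmf QN) (Kf M N h p)"
    unfolding Kf_eq by (intro integrable_mult_right isum)
  have "(\<integral>s. Kf M N h p s \<partial>QN) = 1 / A *
      (\<integral>s. (\<Sum>\<iota>\<in>Inj. \<Sum>c\<in>UNIV. (\<Prod>m<M. h m (s (\<iota> m) m) c) / (p c) ^ (M - 1)) \<partial>QN)"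
    unfolding Kf_eq by (rule integral_mult_right_zero)
  also have "(\<integral>s. (\<Sum>\<iota>\<in>Inj. \<Sum>c\<in>UNIV. (\<Prod>m<M. h m (s (\<iota> m) m) c) / (p c) ^ (M - 1)) \<partial>QN)
      = (\<Sum>\<iota>\<in>Inj. (\<integral>s. (\<Sum>c\<in>UNIV. (\<Prod>m<M. h m (s (\<iota> m) m) c) / (p c) ^ (M - 1)) \<partial>QN))"
    by (rule Bochner_Integration.integral_sum) (intro Bochner_Integration.integrable_sum integrable_divide ip)
  also have "\<dots> = (\<Sum>\<iota>\<in>Inj. Tq M P h p)"
  proof (rule sum.cong[OF refl])
    fix \<iota> assume \<iota>: "\<iota> \<in> Inj"
    have "(\<integral>s. (\<Sum>c\<in>UNIV. (\<Prod>m<M. h m (s (\<iota> m) m) c) / (p c) ^ (M - 1)) \<partial>QN)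
        = (\<Sum>c\<in>UNIV. (\<integral>s. (\<Prod>m<M. h m (s (\<iota> m) m) c) / (p c) ^ (M - 1) \<partial>QN))"
      by (rule Bochner_Integration.integral_sum) (intro integrable_divide ip[OF \<iota>])
    also have "\<dots> = (\<Sum>c\<in>UNIV. (\<integral>s. (\<Prod>m<M. h m (s (\<iota> m) m) c) \<partial>QN) / (p c) ^ (M - 1))"
      by (intro sum.cong refl integral_divide_zero)
    also have "\<dots> = Tq M P h p" unfolding Tq_def by (intro sum.cong refl) (simp only: ep[OF \<iota>])
    finally show "(\<integral>s. (\<Sum>c\<in>UNIV. (\<Prod>m<M. h m (s (\<iota> m) m) c) / (p c) ^ (M - 1)) \<partial>QN) = Tq M P h p" .
  qed
  also have "\<dots> = real (card Inj) * Tq M P h p" by simp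
  finally show "(\<integral>s. Kf M N h p s \<partial>QN) = Tq M P h p" using A Apos by simp
qed

end


lemma sum_minf: "0 < (n::nat) \<Longrightarrow> (\<Sum>i<n. (-\<infinity>::ereal)) = -\<infinity>"
proof (induction n)
  case 0 then show ?case by simp
next
  case (Suc k)
  show ?case
  proof (cases "k = 0")
    case True then show ?thesis by simp
  next
    case False then show ?thesis using Suc by simp
  qed
qed

context
  fixes P :: "((nat \<Rightarrow> 'x) \<times> 'c::finite) pmf" and M N :: nat
  assumes M1: "1 \<le> M" and MN: "M \<le> N"
    and prior_pos: "\<forall>c. 0 < prior P c"
    and A1: "\<forall>x \<in> {..<M} \<rightarrow>\<^sub>E (UNIV :: 'x set). \<forall>c.
        measure_pmf.prob P {w. (\<forall>m<M. fst w m = x m) \<and> snd w = c} / prior P c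
        = (\<Prod>m<M. measure_pmf.prob P {w. fst w m = x m \<and> snd w = c} / prior P c)"
begin

lemma Npos: "0 < N" using M1 MN by simp

definition phi where "phi h p x = ln (Rratio M P x) + Ssum M h p x / Rratio M P x - 1"
definition gf where "gf h p s = 1 + (1 / real N) * (\<Sum>i<N. phi h p (s i)) - Kf M N h p s"
definition Dg where "Dg h p = (\<integral>x. Ssum M h p x * (1 - indicator (set_pmf (jointX M P)) x) \<partial>Q0 M P)"

lemma Ssum_bd:
  assumes adm: "admissible M P h p"
  shows "\<And>x. x \<in> Ess M P \<Longrightarrow> 0 \<le> Ssum M h p x \<and> Ssum M h p x \<le> (\<Sum>c\<in>UNIV. 1 / p c ^ (M - 1))"
  using Ssum_bound[OF adm] by blast

lemma int_phi:
  assumes adm: "admissible M P h p"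
  shows "integrable (measure_pmf (jointX M P)) (phi h p)"
    "(\<integral>x. phi h p x \<partial>jointX M P) = (\<integral>x. ln (Rratio M P x) \<partial>jointX M P)
        + (\<integral>x. Ssum M h p x * indicator (set_pmf (jointX M P)) x \<partial>Q0 M P) - 1"
proof -
  note i1 = int_lnR[OF M1 prior_pos A1]
  note i2 = int_GR(1)[OF M1 prior_pos A1 Ssum_bd[OF adm]]
  note e2 = int_GR(3)[OF M1 prior_pos A1 Ssum_bd[OF adm]]
  have pd: "phi h p = (\<lambda>x. ln (Rratio M P x) + Ssum M h p x / Rratio M P x - 1)"
    by (simp add: phi_def[abs_def])
  show "integrable (measure_pmf (jointX M P)) (phi h p)"
    unfolding pd using i1 i2 by simp
  show "(\<integral>x. phi h p x \<partial>jointX M P) = (\<integral>x. ln (Rratio M P x) \<partial>jointX M P)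
        + (\<integral>x. Ssum M h p x * indicator (set_pmf (jointX M P)) x \<partial>Q0 M P) - 1"
    unfolding pd using i1 i2 e2 by simp
qed

lemma Dg_split:
  assumes adm: "admissible M P h p"
  shows "Tq M P h p = (\<integral>x. Ssum M h p x * indicator (set_pmf (jointX M P)) x \<partial>Q0 M P) + Dg h p"
    "integrable (measure_pmf (Q0 M P)) (\<lambda>x. Ssum M h p x * (1 - indicator (set_pmf (jointX M P)) x))"
    "\<And>x. x \<in> set_pmf (Q0 M P) \<Longrightarrow> 0 \<le> Ssum M h p x * (1 - indicator (set_pmf (jointX M P)) x)"
proof -
  note iS = EQ0(1)[OF adm]
  note i2 = int_GR(2)[OF M1 prior_pos A1 Ssum_bd[OF adm]]
  have e: "Ssum M h p x * (1 - indicator (set_pmf (jointX M P)) x)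
      = Ssum M h p x - Ssum M h p x * indicator (set_pmf (jointX M P)) x" for x
    by (simp add: algebra_simps)
  show i3: "integrable (measure_pmf (Q0 M P)) (\<lambda>x. Ssum M h p x * (1 - indicator (set_pmf (jointX M P)) x))"
    unfolding e using iS i2 by simp
  show "Tq M P h p = (\<integral>x. Ssum M h p x * indicator (set_pmf (jointX M P)) x \<partial>Q0 M P) + Dg h p"
    unfolding Dg_def e EQ0(2)[OF adm, symmetric] using iS i2 by simp
  fix x assume "x \<in> set_pmf (Q0 M P)"
  then have "0 \<le> Ssum M h p x" using Ssum_bd[OF adm] by (simp add: set_Q0)
  then show "0 \<le> Ssum M h p x * (1 - indicator (set_pmf (jointX M P)) x)"
    by (simp split: split_indicator)
qed

lemma Dg_nonneg: "admissible M P h p \<Longrightarrow> 0 \<le> Dg h p"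
  unfolding Dg_def using Dg_split(3) by (intro integral_nonneg_AE AE_pmfI) blast

lemma int_g:
  assumes adm: "admissible M P h p"
  shows "integrable (measure_pmf (QN P M N)) (gf h p)"
    "(\<integral>s. gf h p s \<partial>QN P M N) = (\<integral>x. ln (Rratio M P x) \<partial>jointX M P) - Dg h p"
proof -
  note ip = int_phi[OF adm]
  note ic = comp_QN[OF MN _ ip(1)]
  note ik = EK[OF MN adm]
  have gd: "gf h p = (\<lambda>s. 1 + (1 / real N) * (\<Sum>i<N. phi h p (s i)) - Kf M N h p s)"
    by (simp add: gf_def[abs_def])
  have isum: "integrable (measure_pmf (QN P M N)) (\<lambda>s. \<Sum>i<N. phi h p (s i))"
    by (intro Bochner_Integration.integrable_sum) (simp add: ic)
  show "integrable (measure_pmf (QN P M N)) (gf h p)"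
    unfolding gd using isum ik(1) by simp
  have "(\<integral>s. (\<Sum>i<N. phi h p (s i)) \<partial>QN P M N) = (\<Sum>i<N. \<integral>s. phi h p (s i) \<partial>QN P M N)"
    by (rule Bochner_Integration.integral_sum) (simp add: ic)
  also have "\<dots> = real N * (\<integral>x. phi h p x \<partial>jointX M P)" by (simp add: ic)
  finally have es: "(\<integral>s. (\<Sum>i<N. phi h p (s i)) \<partial>QN P M N) = real N * (\<integral>x. phi h p x \<partial>jointX M P)" .
  have "(\<integral>s. gf h p s \<partial>QN P M N) = 1 + (1 / real N) * (real N * (\<integral>x. phi h p x \<partial>jointX M P)) - Tq M P h p"
    unfolding gd using isum ik es by simp
  also have "\<dots> = 1 + (\<integral>x. phi h p x \<partial>jointX M P) - Tq M P h p" using Npos by simp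
  finally show "(\<integral>s. gf h p s \<partial>QN P M N) = (\<integral>x. ln (Rratio M P x) \<partial>jointX M P) - Dg h p"
    using ip(2) Dg_split(1)[OF adm] by simp
qed

lemma elog_le:
  assumes adm: "admissible M P h p" and x: "x \<in> set_pmf (jointX M P)"
  shows "elog (Ssum M h p x) \<le> ereal (phi h p x)"
proof (cases "0 < Ssum M h p x")
  case True
  have R: "0 < Rratio M P x" using R_J[OF M1 prior_pos A1 x] .
  have "ln (Ssum M h p x / Rratio M P x) \<le> Ssum M h p x / Rratio M P x - 1"
    using True R by (intro ln_le_minus_one) simp
  then have "ln (Ssum M h p x) \<le> phi h p x"
    using True R by (simp add: phi_def ln_div)
  then show ?thesis using True by (simp add: elog_def)
next
  case False then show ?thesis by (simp add: elog_def)
qed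

lemma TCg_le:
  assumes adm: "admissible M P h p" and s: "s \<in> set_pmf (QN P M N)"
  shows "TCg M N s h p \<le> ereal (gf h p s)"
proof -
  have "(\<Sum>i<N. elog (Ssum M h p (s i))) \<le> (\<Sum>i<N. ereal (phi h p (s i)))"
    by (intro sum_mono elog_le[OF adm] set_QN[OF MN s]) simp
  also have "\<dots> = ereal (\<Sum>i<N. phi h p (s i))" by simp
  finally have a: "ereal (1 / real N) * (\<Sum>i<N. elog (Ssum M h p (s i))) \<le> ereal (1 / real N) * ereal (\<Sum>i<N. phi h p (s i))"
    by (rule ereal_mult_left_mono) simp
  have "TCg M N s h p \<le> 1 + ereal (1 / real N) * ereal (\<Sum>i<N. phi h p (s i)) - ereal (Kf M N h p s)"
    unfolding TCg_alt by (intro ereal_minus_mono add_left_mono a order_refl)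
  also have "\<dots> = ereal (gf h p s)" by (simp add: gf_def one_ereal_def)
  finally show ?thesis .
qed

lemma eTCg_le:
  assumes adm: "admissible M P h p"
  shows "eTCg M N P h p \<le> ereal (\<integral>s. gf h p s \<partial>QN P M N)"
    "eTCg M N P h p = ereal (\<integral>s. gf h p s \<partial>QN P M N) \<Longrightarrow> \<forall>s\<in>set_pmf (QN P M N). TCg M N s h p = ereal (gf h p s)"
proof -
  have E: "eexpect (QN P M N) (\<lambda>s. TCg M N s h p) \<le> ereal (\<integral>s. gf h p s \<partial>QN P M N) \<and>
    (eexpect (QN P M N) (\<lambda>s. TCg M N s h p) = ereal (\<integral>s. gf h p s \<partial>QN P M N) \<longrightarrow>
      (\<forall>z\<in>set_pmf (QN P M N). TCg M N z h p = ereal (gf h p z)))"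
    by (rule eexpect_le[OF int_g(1)[OF adm] TCg_le[OF adm]])
  have ee: "eTCg M N P h p = eexpect (QN P M N) (\<lambda>s. TCg M N s h p)" by (simp add: eTCg_def)
  show "eTCg M N P h p \<le> ereal (\<integral>s. gf h p s \<partial>QN P M N)" using E unfolding ee by blast
  show "eTCg M N P h p = ereal (\<integral>s. gf h p s \<partial>QN P M N) \<Longrightarrow> \<forall>s\<in>set_pmf (QN P M N). TCg M N s h p = ereal (gf h p s)"
    using E unfolding ee by blast
qed

end


lemma score_restrict: "score M h p (restrict x {..<M}) c = score M h p x c"
  unfolding score_def by (intro arg_cong2[where f="(/)"] prod.cong refl) simp

lemma Rratio_restrict: "Rratio M P (restrict x {..<M}) = Rratio M P x"
proof -
  have "{w. \<forall>m<M. fst w m = restrict x {..<M} m} = {w. \<forall>m<M. fst w m = x m}" by auto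
  moreover have "(\<Prod>m<M. measure_pmf.prob P {w. fst w m = restrict x {..<M} m})
      = (\<Prod>m<M. measure_pmf.prob P {w. fst w m = x m})" by (intro prod.cong refl) simp
  ultimately show ?thesis unfolding Rratio_def by simp
qed

lemma restrict_Ess: "(\<forall>m<M. x m \<in> Xspace P m) \<Longrightarrow> restrict x {..<M} \<in> Ess M P"
  by (simp add: Ess_def)

context
  fixes P :: "((nat \<Rightarrow> 'x) \<times> 'c::finite) pmf" and M N :: nat
  assumes M1: "1 \<le> M" and MN: "M \<le> N"
    and prior_pos: "\<forall>c. 0 < prior P c"
    and A1: "\<forall>x \<in> {..<M} \<rightarrow>\<^sub>E (UNIV :: 'x set). \<forall>c.
        measure_pmf.prob P {w. (\<forall>m<M. fst w m = x m) \<and> snd w = c} / prior P c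
        = (\<Prod>m<M. measure_pmf.prob P {w. fst w m = x m \<and> snd w = c} / prior P c)"
begin

abbreviation "JJ \<equiv> jointX M P"
abbreviation "QQ \<equiv> Pi_pmf {..<N} undefined (\<lambda>_. jointX M P)"

lemmas ctx = M1 MN prior_pos A1
lemmas ctx3 = M1 prior_pos A1

lemma Npos': "0 < N" using M1 MN by simp

lemma gf_eq: "gf P M N h p s = 1 + 1 / real N * (\<Sum>i<N. phi P M h p (s i)) - Kf M N h p s"
  by (rule gf_def[OF ctx])

lemma phi_eq: "phi P M h p x = ln (Rratio M P x) + Ssum M h p x / Rratio M P x - 1"
  by (rule phi_def[OF ctx])

lemma hadm: "admissible M P (hstar P) (prior P)" by (rule hstar_adm[OF ctx3])

lemma hS: "x \<in> Ess M P \<Longrightarrow> Ssum M (hstar P) (prior P) x = Rratio M P x"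
  unfolding Ssum_def by (rule hstar_R[OF ctx3])

lemma hstar_val: "eTCg M N P (hstar P) (prior P) = TC M P"
proof -
  let ?h = "hstar P" and ?p = "prior P"
  have phiJ: "phi P M ?h ?p x = ln (Rratio M P x)" if x: "x \<in> set_pmf JJ" for x
    using hS[OF set_J[OF x]] R_J[OF ctx3 x] by (simp add: phi_eq)
  have elogJ: "elog (Ssum M ?h ?p x) = ereal (phi P M ?h ?p x)" if x: "x \<in> set_pmf JJ" for x
    using hS[OF set_J[OF x]] R_J[OF ctx3 x] phiJ[OF x] by (simp add: elog_def)
  have pt: "TCg M N s ?h ?p = ereal (gf P M N ?h ?p s)" if s: "s \<in> set_pmf QQ" for s
  proof -
    have "(\<Sum>i<N. elog (Ssum M ?h ?p (s i))) = (\<Sum>i<N. ereal (phi P M ?h ?p (s i)))"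
      by (intro sum.cong refl elogJ set_QN[OF MN s]) simp
    also have "\<dots> = ereal (\<Sum>i<N. phi P M ?h ?p (s i))" by simp
    finally have e: "(\<Sum>i<N. elog (Ssum M ?h ?p (s i))) = ereal (\<Sum>i<N. phi P M ?h ?p (s i))" .
    show ?thesis unfolding TCg_alt e gf_eq by (simp add: one_ereal_def)
  qed
  have "eTCg M N P ?h ?p = eexpect QQ (\<lambda>s. ereal (gf P M N ?h ?p s))"
    unfolding eTCg_def by (rule eexpect_cong) (rule pt)
  also have "\<dots> = ereal (\<integral>s. gf P M N ?h ?p s \<partial>QQ)"
    by (rule eexpect_real[OF int_g(1)[OF ctx hadm]])
  also have "(\<integral>s. gf P M N ?h ?p s \<partial>QQ) = (\<integral>x. ln (Rratio M P x) \<partial>JJ) - Dg P M ?h ?p"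
    by (rule int_g(2)[OF ctx hadm])
  also have "Dg P M ?h ?p = 0"
  proof -
    have "Dg P M ?h ?p = (\<integral>x. 0 \<partial>Q0 M P)"
      unfolding Dg_def[OF ctx]
    proof (intro integral_cong_AE AE_pmfI)
      fix x assume x: "x \<in> set_pmf (Q0 M P)"
      then have xe: "x \<in> Ess M P" by (simp add: set_Q0)
      show "Ssum M ?h ?p x * (1 - indicator (set_pmf JJ) x) = 0"
      proof (cases "x \<in> set_pmf JJ")
        case True then show ?thesis by simp
      next
        case False then show ?thesis using hS[OF xe] R_notJ[OF ctx3 xe False] by simp
      qed
    qed simp_all
    then show ?thesis by simp
  qed
  finally show ?thesis using TC_eq[OF ctx3] by simp
qed

lemma sample_eq:
  assumes adm: "admissible M P h p" and x: "x \<in> set_pmf JJ"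
    and eq: "TCg M N (\<lambda>i. if i < N then x else undefined) h p = ereal (gf P M N h p (\<lambda>i. if i < N then x else undefined))"
  shows "Ssum M h p x = Rratio M P x"
proof -
  define s where "s = (\<lambda>i. if i < N then x else (undefined :: nat \<Rightarrow> 'x))"
  have s_i: "s i = x" if "i < N" for i using that by (simp add: s_def)
  have R: "0 < Rratio M P x" using R_J[OF ctx3 x] .
  have S0: "0 \<le> Ssum M h p x" using Ssum_bound[OF adm set_J[OF x]] by simp
  have sphi: "(\<Sum>i<N. phi P M h p (s i)) = real N * phi P M h p x"
    by (simp add: s_i)
  have gfx: "gf P M N h p s = 1 + phi P M h p x - Kf M N h p s"
    using Npos' by (simp add: gf_eq sphi)
  have eq': "TCg M N s h p = ereal (gf P M N h p s)" using eq by (simp add: s_def)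
  show ?thesis
  proof (cases "0 < Ssum M h p x")
    case True
    have "(\<Sum>i<N. elog (Ssum M h p (s i))) = (\<Sum>i<N. ereal (ln (Ssum M h p x)))"
      by (intro sum.cong refl) (simp add: s_i True elog_def)
    also have "\<dots> = ereal (real N * ln (Ssum M h p x))" by simp
    finally have e: "(\<Sum>i<N. elog (Ssum M h p (s i))) = ereal (real N * ln (Ssum M h p x))" .
    have "TCg M N s h p = ereal (1 + ln (Ssum M h p x) - Kf M N h p s)"
      unfolding TCg_alt e using Npos' by (simp add: one_ereal_def)
    then have "ln (Ssum M h p x) = phi P M h p x" using eq' gfx by simp
    then have "ln (Ssum M h p x) - ln (Rratio M P x) = Ssum M h p x / Rratio M P x - 1"
      by (simp add: phi_eq)
    then have "ln (Ssum M h p x / Rratio M P x) = Ssum M h p x / Rratio M P x - 1"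
      using True R by (simp add: ln_div)
    then have "Ssum M h p x / Rratio M P x = 1"
      by (rule ln_eq_minus_one[rotated]) (use True R in simp)
    then show ?thesis using R by simp
  next
    case False
    then have S: "Ssum M h p x = 0" using S0 by simp
    have "(\<Sum>i<N. elog (Ssum M h p (s i))) = (\<Sum>i<N. (-\<infinity>::ereal))"
      by (intro sum.cong refl) (simp add: s_i S elog_def)
    also have "\<dots> = -\<infinity>" by (rule sum_minf[OF Npos'])
    finally have e: "(\<Sum>i<N. elog (Ssum M h p (s i))) = -\<infinity>" .
    have "ereal (1 / real N) * (-\<infinity>) = -\<infinity>" using Npos' by simp
    then have "TCg M N s h p = -\<infinity>" unfolding TCg_alt e by simp
    then show ?thesis using eq' by simp
  qed
qed

lemma maximizer_eq:
  assumes adm: "admissible M P h p" and ge: "TC M P \<le> eTCg M N P h p"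
  shows "\<forall>x\<in>Ess M P. Ssum M h p x = Rratio M P x"
proof -
  have le1: "eTCg M N P h p \<le> ereal (\<integral>s. gf P M N h p s \<partial>QQ)" by (rule eTCg_le(1)[OF ctx adm])
  have ig: "(\<integral>s. gf P M N h p s \<partial>QQ) = (\<integral>x. ln (Rratio M P x) \<partial>JJ) - Dg P M h p"
    by (rule int_g(2)[OF ctx adm])
  have dn: "0 \<le> Dg P M h p" by (rule Dg_nonneg[OF ctx adm])
  have tc: "TC M P = ereal (\<integral>x. ln (Rratio M P x) \<partial>JJ)" by (rule TC_eq[OF ctx3])
  have a: "ereal (\<integral>x. ln (Rratio M P x) \<partial>JJ) \<le> eTCg M N P h p" using ge tc by simp
  have b: "eTCg M N P h p \<le> ereal ((\<integral>x. ln (Rratio M P x) \<partial>JJ) - Dg P M h p)" using le1 ig by simp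
  have "ereal (\<integral>x. ln (Rratio M P x) \<partial>JJ) \<le> ereal ((\<integral>x. ln (Rratio M P x) \<partial>JJ) - Dg P M h p)"
    by (rule order_trans[OF a b])
  then have D0: "Dg P M h p = 0" using dn by simp
  have E: "eTCg M N P h p = ereal (\<integral>s. gf P M N h p s \<partial>QQ)"
    using ge le1 ig tc D0 by (simp add: antisym)
  have pt: "\<forall>s\<in>set_pmf QQ. TCg M N s h p = ereal (gf P M N h p s)"
    by (rule eTCg_le(2)[OF ctx adm E])
  have AE0: "AE x in measure_pmf (Q0 M P). Ssum M h p x * (1 - indicator (set_pmf JJ) x) = 0"
  proof -
    have "AE x in measure_pmf (Q0 M P). 0 \<le> Ssum M h p x * (1 - indicator (set_pmf JJ) x)"
      using Dg_split(3)[OF ctx adm] by (intro AE_pmfI) blast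
    then show ?thesis
      using integral_nonneg_eq_0_iff_AE[OF Dg_split(2)[OF ctx adm]] D0 unfolding Dg_def[OF ctx]
      by blast
  qed
  show ?thesis
  proof
    fix x assume xe: "x \<in> Ess M P"
    show "Ssum M h p x = Rratio M P x"
    proof (cases "x \<in> set_pmf JJ")
      case True
      show ?thesis
        by (rule sample_eq[OF adm True]) (use pt sample_in[OF MN True] in blast)
    next
      case False
      have "x \<in> set_pmf (Q0 M P)" using xe by (simp add: set_Q0)
      then have "Ssum M h p x * (1 - indicator (set_pmf JJ) x) = 0"
        using AE0 by (simp add: AE_measure_pmf_iff)
      then show ?thesis using False R_notJ[OF ctx3 xe False] by simp
    qed
  qed
qed

lemma zeta_ok:
  assumes x: "x \<in> set_pmf JJ"
  shows "zeta M (hstar P) (prior P) x c = zetastar M P x c"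
proof -
  have xe: "x \<in> Ess M P" by (rule set_J[OF x])
  have pq: "0 < Pq M P x" by (rule Pq_pos[OF xe])
  have pj: "0 < Pj M P x" using set_J_iff[OF xe] x by simp
  have "(\<Sum>d\<in>UNIV. score M (hstar P) (prior P) x d) = Pj M P x / Pq M P x"
    using hstar_R[OF ctx3 xe] by (simp add: Rratio_eq)
  then show ?thesis
    unfolding zeta_def normalize_vec_def zetastar_def
    using hstar_score[OF ctx3 xe, of c] pq pj by (simp add: Pj_def)
qed

end


theorem mainTheorem3:
  fixes P :: "((nat \<Rightarrow> 'x) \<times> 'c::finite) pmf" and M N :: nat
  assumes M2: "2 \<le> M" and NM: "M \<le> N"
    and prior_pos: "\<forall>c. 0 < prior P c"
    and A1: "\<forall>x \<in> {..<M} \<rightarrow>\<^sub>E (UNIV :: 'x set). \<forall>c.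
        measure_pmf.prob P {w. (\<forall>m<M. fst w m = x m) \<and> snd w = c} / prior P c
        = (\<Prod>m<M. measure_pmf.prob P {w. fst w m = x m \<and> snd w = c} / prior P c)"
    and A2: "\<forall>a b :: nat \<Rightarrow> 'x \<Rightarrow> 'c \<Rightarrow> real. \<forall>ra rb :: 'c \<Rightarrow> real.
        admissible M P a ra \<and> admissible M P b rb
        \<and> (\<forall>x. (\<forall>m<M. x m \<in> Xspace P m) \<longrightarrow> (\<Sum>c\<in>UNIV. score M a ra x c) = Rratio M P x)
        \<and> (\<forall>x. (\<forall>m<M. x m \<in> Xspace P m) \<longrightarrow> (\<Sum>c\<in>UNIV. score M b rb x c) = Rratio M P x)
        \<longrightarrow> (\<exists>\<pi>. bij \<pi> \<and> (\<forall>m<M. \<forall>x\<in>Xspace P m. \<forall>c. a m x c = b m x (\<pi> c))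
                      \<and> (\<forall>c. ra c = rb (\<pi> c)))"
  shows
    "((\<exists>h p. admissible M P h p \<and> eTCg M N P h p = TC M P)
       \<and> (\<forall>h p. admissible M P h p \<longrightarrow> eTCg M N P h p \<le> TC M P))
     \<and> (admissible M P (hstar P) (prior P)
       \<and> (\<forall>h p. admissible M P h p \<longrightarrow> eTCg M N P h p \<le> eTCg M N P (hstar P) (prior P))
       \<and> (\<forall>x\<in>set_pmf (jointX M P). \<forall>c. zeta M (hstar P) (prior P) x c = zetastar M P x c))
     \<and> (\<forall>h p. admissible M P h p
          \<and> (\<forall>h' p'. admissible M P h' p' \<longrightarrow> eTCg M N P h' p' \<le> eTCg M N P h p)
          \<longrightarrow> (\<exists>\<pi>. bij \<pi> \<and> (\<forall>m<M. \<forall>x\<in>Xspace P m. \<forall>c. h m x c = hstar P m x (\<pi> c))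
                       \<and> (\<forall>c. p c = prior P (\<pi> c))))"
proof -
  have M1: "1 \<le> M" using M2 by simp
  note ctx = M1 NM prior_pos A1
  have hadm: "admissible M P (hstar P) (prior P)" by (rule hadm[OF ctx])
  have hval: "eTCg M N P (hstar P) (prior P) = TC M P" by (rule hstar_val[OF ctx])
  have ub: "eTCg M N P h p \<le> TC M P" if adm: "admissible M P h p" for h p
  proof -
    have "eTCg M N P h p \<le> ereal (\<integral>s. gf P M N h p s \<partial>Pi_pmf {..<N} undefined (\<lambda>_. jointX M P))"
      by (rule eTCg_le(1)[OF ctx adm])
    also have "(\<integral>s. gf P M N h p s \<partial>Pi_pmf {..<N} undefined (\<lambda>_. jointX M P))
        = (\<integral>x. ln (Rratio M P x) \<partial>jointX M P) - Dg P M h p"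
      by (rule int_g(2)[OF ctx adm])
    also have "ereal ((\<integral>x. ln (Rratio M P x) \<partial>jointX M P) - Dg P M h p) \<le> ereal (\<integral>x. ln (Rratio M P x) \<partial>jointX M P)"
      using Dg_nonneg[OF ctx adm] by simp
    also have "\<dots> = TC M P" by (rule TC_eq[OF M1 prior_pos A1, symmetric])
    finally show ?thesis .
  qed
  have part3: "\<exists>\<pi>. bij \<pi> \<and> (\<forall>m<M. \<forall>x\<in>Xspace P m. \<forall>c. h m x c = hstar P m x (\<pi> c))
                       \<and> (\<forall>c. p c = prior P (\<pi> c))"
    if adm: "admissible M P h p" and mx: "\<forall>h' p'. admissible M P h' p' \<longrightarrow> eTCg M N P h' p' \<le> eTCg M N P h p" for h p
  proof -
    have "TC M P \<le> eTCg M N P h p" using mx hadm hval by metis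
    then have eqS: "\<forall>x\<in>Ess M P. Ssum M h p x = Rratio M P x" by (rule maximizer_eq[OF ctx adm])
    have c1: "(\<Sum>c\<in>UNIV. score M h p x c) = Rratio M P x" if "\<forall>m<M. x m \<in> Xspace P m" for x
    proof -
      have "(\<Sum>c\<in>UNIV. score M h p x c) = Ssum M h p (restrict x {..<M})"
        by (simp add: Ssum_def score_restrict)
      also have "\<dots> = Rratio M P (restrict x {..<M})" using eqS restrict_Ess[OF that] by blast
      also have "\<dots> = Rratio M P x" by (rule Rratio_restrict)
      finally show ?thesis .
    qed
    have c2: "(\<Sum>c\<in>UNIV. score M (hstar P) (prior P) x c) = Rratio M P x" if "\<forall>m<M. x m \<in> Xspace P m" for x
    proof -
      have "(\<Sum>c\<in>UNIV. score M (hstar P) (prior P) x c) = Ssum M (hstar P) (prior P) (restrict x {..<M})"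
        by (simp add: Ssum_def score_restrict)
      also have "\<dots> = Rratio M P (restrict x {..<M})" by (rule hS[OF ctx restrict_Ess[OF that]])
      also have "\<dots> = Rratio M P x" by (rule Rratio_restrict)
      finally show ?thesis .
    qed
    show ?thesis using A2 adm hadm c1 c2 by blast
  qed
  show ?thesis
    using hadm hval ub part3 zeta_ok[OF ctx] by auto
qed

end
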